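(* Let $(G,\mathcal{B}_1,\mathcal{B}_2)$ be a Rota-Baxter system of groups with cocycle $\Phi$. Then $\Phi(G)=G_{1_G}$, and every element $a\in\Phi(G)$ can be written uniquely as $a=a_1a_2$ with $(a_1,a_2)\in G_\Theta$.
   Context: A Rota-Baxter system of groups is a triple $(G,\mathcal{B}_1,\mathcal{B}_2)$ where $G$ is a group with identity $1_G$ and $\mathcal{B}_1,\mathcal{B}_2:G\to G$ are maps such that for all $a,b\in G$: $\mathcal{B}_1(a)\mathcal{B}_1(b)=\mathcal{B}_1(\mathcal{B}_1(a)b\mathcal{B}_2(a))$ and $\mathcal{B}_2(b)\mathcal{B}_2(a)=\mathcal{B}_2(\mathcal{B}_1(a)b\mathcal{B}_2(a))$. Descendent operation: $a\circ b=\mathcal{B}_1(a)b\mathcal{B}_2(a)$; cocycle: $\Phi(a)=\mathcal{B}_1(a)\mathcal{B}_2(a)$; $e_a=\mathcal{B}_1(a)^{-1}a\mathcal{B}_2(a)^{-1}$; $G_{1_G}=\{a\in G\mid a\circ e_{1_G}=a\}$. Let $\operatorname{Ker}(\mathcal{B}_i)=\{a\in G\mid \mathcal{B}_i(a)=1_G\}$, $G_1=\mathcal{B}_1(G)$, $G_2=\mathcal{B}_2(G)$ (these are subgroups of $G$), $H_1=\mathcal{B}_1(\operatorname{Ker}(\mathcal{B}_2))$, $H_2=\mathcal{B}_2(\operatorname{Ker}(\mathcal{B}_1))$ (these are normal subgroups of $G_1$, $G_2$ respectively). The map $\Theta:G_1/H_1\to G_2/H_2$, $\Theta(\mathcal{B}_1(a)H_1)=\mathcal{B}_2(a)H_2$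 ($a\in G$), is well defined. Set $G_\Theta=\{(a_1,a_2)\in G_1\times G_2\mid \Theta(a_1H_1)=a_2H_2\}$. *)

theory Defs
  imports "HOL-Algebra.Algebra"
begin

definition rota_baxter_system :: "('a, 'b) monoid_scheme \<Rightarrow> ('a \<Rightarrow> 'a) \<Rightarrow> ('a \<Rightarrow> 'a) \<Rightarrow> bool" where
  "rota_baxter_system G B1 B2 \<longleftrightarrow> group G
     \<and> (\<forall>a\<in>carrier G. B1 a \<in> carrier G \<and> B2 a \<in> carrier G)
     \<and> (\<forall>a\<in>carrier G. \<forall>b\<in>carrier G.
          B1 a \<otimes>\<^bsub>G\<^esub> B1 b = B1 (B1 a \<otimes>\<^bsub>G\<^esub> b \<otimes>\<^bsub>G\<^esub> B2 a)
        \<and> B2 b \<otimes>\<^bsub>G\<^esub> B2 a = B2 (B1 a \<otimes>\<^bsub>G\<^esub> b \<otimes>\<^bsub>G\<^esub> B2 a))"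

definition rbs_circ :: "('a, 'b) monoid_scheme \<Rightarrow> ('a \<Rightarrow> 'a) \<Rightarrow> ('a \<Rightarrow> 'a) \<Rightarrow> 'a \<Rightarrow> 'a \<Rightarrow> 'a" where
  "rbs_circ G B1 B2 a b = B1 a \<otimes>\<^bsub>G\<^esub> b \<otimes>\<^bsub>G\<^esub> B2 a"

definition rbs_Phi :: "('a, 'b) monoid_scheme \<Rightarrow> ('a \<Rightarrow> 'a) \<Rightarrow> ('a \<Rightarrow> 'a) \<Rightarrow> 'a \<Rightarrow> 'a" where
  "rbs_Phi G B1 B2 a = B1 a \<otimes>\<^bsub>G\<^esub> B2 a"

definition rbs_e :: "('a, 'b) monoid_scheme \<Rightarrow> ('a \<Rightarrow> 'a) \<Rightarrow> ('a \<Rightarrow> 'a) \<Rightarrow> 'a \<Rightarrow> 'a" where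
  "rbs_e G B1 B2 a = inv\<^bsub>G\<^esub> (B1 a) \<otimes>\<^bsub>G\<^esub> a \<otimes>\<^bsub>G\<^esub> inv\<^bsub>G\<^esub> (B2 a)"

definition rbs_G_one :: "('a, 'b) monoid_scheme \<Rightarrow> ('a \<Rightarrow> 'a) \<Rightarrow> ('a \<Rightarrow> 'a) \<Rightarrow> 'a set" where
  "rbs_G_one G B1 B2 = {a \<in> carrier G. rbs_circ G B1 B2 a (rbs_e G B1 B2 \<one>\<^bsub>G\<^esub>) = a}"

definition rbs_ker :: "('a, 'b) monoid_scheme \<Rightarrow> ('a \<Rightarrow> 'a) \<Rightarrow> 'a set" where
  "rbs_ker G B = {a \<in> carrier G. B a = \<one>\<^bsub>G\<^esub>}"

definition rbs_H1 :: "('a, 'b) monoid_scheme \<Rightarrow> ('a \<Rightarrow> 'a) \<Rightarrow> ('a \<Rightarrow> 'a) \<Rightarrow> 'a set" where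
  "rbs_H1 G B1 B2 = B1 ` rbs_ker G B2"

definition rbs_H2 :: "('a, 'b) monoid_scheme \<Rightarrow> ('a \<Rightarrow> 'a) \<Rightarrow> ('a \<Rightarrow> 'a) \<Rightarrow> 'a set" where
  "rbs_H2 G B1 B2 = B2 ` rbs_ker G B1"

text \<open>G_Theta = {(a1,a2) in G1 x G2 | Theta(a1 H1) = a2 H2}, where
  Theta(B1(a) H1) = B2(a) H2 (well defined, as in the paper).  Unfolding Theta via a
  representative: Theta(a1 H1) = a2 H2 iff for some a in G, a1 H1 = B1(a) H1 and
  a2 H2 = B2(a) H2.\<close>
definition rbs_G_Theta :: "('a, 'b) monoid_scheme \<Rightarrow> ('a \<Rightarrow> 'a) \<Rightarrow> ('a \<Rightarrow> 'a) \<Rightarrow> ('a \<times> 'a) set" where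
  "rbs_G_Theta G B1 B2 =
     {(a1, a2). a1 \<in> B1 ` carrier G \<and> a2 \<in> B2 ` carrier G \<and>
        (\<exists>a\<in>carrier G. a1 <#\<^bsub>G\<^esub> rbs_H1 G B1 B2 = B1 a <#\<^bsub>G\<^esub> rbs_H1 G B1 B2
                    \<and> a2 <#\<^bsub>G\<^esub> rbs_H2 G B1 B2 = B2 a <#\<^bsub>G\<^esub> rbs_H2 G B1 B2)}"

end

theory Submission
  imports Defs
begin

locale rbsys = group G for G (structure) +
  fixes B1 B2 :: "'a \<Rightarrow> 'a"
  assumes cl1: "a \<in> carrier G \<Longrightarrow> B1 a \<in> carrier G"
    and cl2: "a \<in> carrier G \<Longrightarrow> B2 a \<in> carrier G"
    and ax1: "a \<in> carrier G \<Longrightarrow> b \<in> carrier G \<Longrightarrow> B1 a \<otimes> B1 b = B1 (B1 a \<otimes> b \<otimes> B2 a)"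
    and ax2: "a \<in> carrier G \<Longrightarrow> b \<in> carrier G \<Longrightarrow> B2 b \<otimes> B2 a = B2 (B1 a \<otimes> b \<otimes> B2 a)"
begin

definition circ where "circ x y = B1 x \<otimes> y \<otimes> B2 x"
definition ee where "ee = inv (B1 \<one>) \<otimes> \<one> \<otimes> inv (B2 \<one>)"
definition rinv where "rinv x = inv (B1 x) \<otimes> ee \<otimes> inv (B2 x)"

lemma circ_cl[simp]: "x \<in> carrier G \<Longrightarrow> y \<in> carrier G \<Longrightarrow> circ x y \<in> carrier G"
  by (simp add: circ_def cl1 cl2)

lemma ee_cl[simp]: "ee \<in> carrier G" by (simp add: ee_def cl1 cl2)

lemma rinv_cl[simp]: "x \<in> carrier G \<Longrightarrow> rinv x \<in> carrier G"
  by (simp add: rinv_def cl1 cl2)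

lemma B1c: "x \<in> carrier G \<Longrightarrow> y \<in> carrier G \<Longrightarrow> B1 (circ x y) = B1 x \<otimes> B1 y"
  by (simp add: circ_def ax1)
lemma B2c: "x \<in> carrier G \<Longrightarrow> y \<in> carrier G \<Longrightarrow> B2 (circ x y) = B2 y \<otimes> B2 x"
  by (simp add: circ_def ax2)

lemma assoc: "x \<in> carrier G \<Longrightarrow> y \<in> carrier G \<Longrightarrow> z \<in> carrier G \<Longrightarrow>
   circ (circ x y) z = circ x (circ y z)"
proof -
  assume h: "x \<in> carrier G" "y \<in> carrier G" "z \<in> carrier G"
  have "circ (circ x y) z = (B1 x \<otimes> B1 y) \<otimes> z \<otimes> (B2 y \<otimes> B2 x)"
    using h by (simp add: circ_def[of "circ x y"] B1c B2c)
  also have "\<dots> = circ x (circ y z)" using h by (simp add: circ_def m_assoc cl1 cl2)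
  finally show ?thesis .
qed

lemma one_ee: "circ \<one> ee = \<one>"
  by (simp add: circ_def ee_def m_assoc cl1 cl2)

lemma B1ee: "B1 ee = \<one>"
proof -
  have "B1 \<one> \<otimes> B1 ee = B1 \<one> \<otimes> \<one>"
    using B1c[of \<one> ee] one_ee by (simp add: cl1)
  thus ?thesis using l_cancel[of "B1 \<one>" "B1 ee" \<one>] by (simp add: cl1)
qed

lemma B2ee: "B2 ee = \<one>"
proof -
  have "B2 ee \<otimes> B2 \<one> = \<one> \<otimes> B2 \<one>"
    using B2c[of \<one> ee] one_ee by (simp add: cl2)
  thus ?thesis using r_cancel[of "B2 \<one>" "B2 ee" \<one>] by (simp add: cl2)
qed

lemma lid: "x \<in> carrier G \<Longrightarrow> circ ee x = x"
  by (simp add: circ_def B1ee B2ee)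

lemma B1e: "x \<in> carrier G \<Longrightarrow> B1 (circ x ee) = B1 x"
  by (simp add: B1c B1ee cl1)
lemma B2e: "x \<in> carrier G \<Longrightarrow> B2 (circ x ee) = B2 x"
  by (simp add: B2c B2ee cl2)

lemma rinv: "x \<in> carrier G \<Longrightarrow> circ x (rinv x) = ee"
  by (simp add: circ_def rinv_def m_assoc cl1 cl2 flip: m_assoc)
     (simp add: m_assoc cl1 cl2)

lemma ee_idem: "circ ee ee = ee" by (simp add: lid)

definition uu where "uu = circ (rinv \<one>) ee"

lemma uu_cl[simp]: "uu \<in> carrier G" by (simp add: uu_def)

lemma uu_e: "circ uu ee = uu"
  by (simp add: uu_def assoc ee_idem)

lemma one_uu: "circ \<one> uu = ee"
  by (simp add: uu_def flip: assoc) (simp add: rinv ee_idem)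

lemma uu_one: "circ uu \<one> = ee"
proof -
  define v where "v = circ (rinv uu) ee"
  have vc: "v \<in> carrier G" by (simp add: v_def)
  have uv: "circ uu v = ee" by (simp add: v_def flip: assoc) (simp add: rinv ee_idem)
  have "circ uu \<one> = circ (circ uu \<one>) ee" by (simp add: assoc one_ee)
  also have "\<dots> = circ (circ uu \<one>) (circ uu v)" by (simp add: uv)
  also have "\<dots> = circ uu (circ (circ \<one> uu) v)" by (simp add: assoc vc)
  also have "\<dots> = ee" by (simp add: one_uu lid vc uv)
  finally show ?thesis .
qed

lemma Phi_circ: "x \<in> carrier G \<Longrightarrow> rbs_Phi G B1 B2 x = circ x \<one>"
  by (simp add: rbs_Phi_def circ_def cl1 cl2)

end

theorem theorem5p7:
  fixes G (structure) and B1 B2 :: "'a \<Rightarrow> 'a"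
  assumes "rota_baxter_system G B1 B2"
  shows "rbs_Phi G B1 B2 ` carrier G = rbs_G_one G B1 B2
       \<and> (\<forall>a \<in> rbs_Phi G B1 B2 ` carrier G.
            \<exists>!p. p \<in> rbs_G_Theta G B1 B2 \<and> a = fst p \<otimes> snd p)"
proof -
  interpret rbsys G B1 B2
    using assms unfolding rota_baxter_system_def rbsys_def rbsys_axioms_def by blast
  have circ_eq: "rbs_circ G B1 B2 = circ" by (auto simp: rbs_circ_def circ_def fun_eq_iff)
  have e_eq: "rbs_e G B1 B2 \<one> = ee" by (simp add: rbs_e_def ee_def)
  have G1: "rbs_G_one G B1 B2 = {a \<in> carrier G. circ a ee = a}"
    by (simp add: rbs_G_one_def circ_eq e_eq)
  have part1: "rbs_Phi G B1 B2 ` carrier G = rbs_G_one G B1 B2"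
  proof
    show "rbs_Phi G B1 B2 ` carrier G \<subseteq> rbs_G_one G B1 B2"
      by (auto simp: G1 Phi_circ assoc one_ee)
  next
    show "rbs_G_one G B1 B2 \<subseteq> rbs_Phi G B1 B2 ` carrier G"
    proof
      fix a assume "a \<in> rbs_G_one G B1 B2"
      hence a: "a \<in> carrier G" "circ a ee = a" by (auto simp: G1)
      have "rbs_Phi G B1 B2 (circ a uu) = a"
        using a by (simp add: Phi_circ assoc uu_one)
      thus "a \<in> rbs_Phi G B1 B2 ` carrier G" using a by (metis circ_cl uu_cl image_eqI)
    qed
  qed
  have part2: "\<exists>!p. p \<in> rbs_G_Theta G B1 B2 \<and> a = fst p \<otimes> snd p"
    if "a \<in> rbs_Phi G B1 B2 ` carrier G" for a
  proof -
    from that obtain b where b: "b \<in> carrier G" "a = B1 b \<otimes> B2 b"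
      by (auto simp: rbs_Phi_def)
    have one1: "\<one> \<in> rbs_H1 G B1 B2"
      by (auto simp: rbs_H1_def rbs_ker_def B1ee B2ee intro!: image_eqI[of _ _ ee])
    have one2: "\<one> \<in> rbs_H2 G B1 B2"
      by (auto simp: rbs_H2_def rbs_ker_def B1ee B2ee intro!: image_eqI[of _ _ ee])
    have uniq: "p = (B1 b, B2 b)" if p: "p \<in> rbs_G_Theta G B1 B2" "a = fst p \<otimes> snd p" for p
    proof -
      obtain a1 a2 where pe: "p = (a1, a2)" by (cases p)
      from p obtain w where a1c: "a1 \<in> carrier G" and a2c: "a2 \<in> carrier G" and w: "w \<in> carrier G"
        and c1: "a1 <# rbs_H1 G B1 B2 = B1 w <# rbs_H1 G B1 B2"
        and c2: "a2 <# rbs_H2 G B1 B2 = B2 w <# rbs_H2 G B1 B2"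
        and aa: "a = a1 \<otimes> a2"
        by (auto simp: rbs_G_Theta_def pe cl1 cl2)
      have "a1 \<in> a1 <# rbs_H1 G B1 B2"
        using one1 a1c by (force simp: l_coset_def)
      with c1 obtain k1 where k1: "k1 \<in> carrier G" "B2 k1 = \<one>" "a1 = B1 w \<otimes> B1 k1"
        by (auto simp: l_coset_def rbs_H1_def rbs_ker_def)
      have "a2 \<in> a2 <# rbs_H2 G B1 B2"
        using one2 a2c by (force simp: l_coset_def)
      with c2 obtain k2 where k2: "k2 \<in> carrier G" "B1 k2 = \<one>" "a2 = B2 w \<otimes> B2 k2"
        by (auto simp: l_coset_def rbs_H2_def rbs_ker_def)
      define t where "t = circ k2 (circ w k1)"
      have tc: "t \<in> carrier G" using k1 k2 w by (simp add: t_def)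
      have t1: "B1 t = a1" using k1 k2 w by (simp add: t_def B1c cl1)
      have t2: "B2 t = a2" using k1 k2 w by (simp add: t_def B2c cl2 m_assoc)
      have "circ t \<one> = circ b \<one>"
        proof -
        have "circ t \<one> = B1 t \<otimes> B2 t" using tc by (simp add: circ_def cl1)
        also have "\<dots> = B1 b \<otimes> B2 b" using t1 t2 aa b(2) by metis
        also have "\<dots> = circ b \<one>" using b(1) by (simp add: circ_def cl1)
        finally show ?thesis .
      qed
      hence "circ (circ t \<one>) uu = circ (circ b \<one>) uu" by simp
      hence "circ t ee = circ b ee" using tc b by (simp add: assoc one_uu)
      hence "B1 t = B1 b \<and> B2 t = B2 b" using tc b by (metis B1e B2e)
      thus ?thesis using t1 t2 pe by simp
    qed
    have ex: "(B1 b, B2 b) \<in> rbs_G_Theta G B1 B2"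
      using b by (auto simp: rbs_G_Theta_def)
    show ?thesis
    proof (rule ex1I[of _ "(B1 b, B2 b)"])
      show "(B1 b, B2 b) \<in> rbs_G_Theta G B1 B2 \<and> a = fst (B1 b, B2 b) \<otimes> snd (B1 b, B2 b)"
        using ex b(2) by simp
    next
      fix p assume "p \<in> rbs_G_Theta G B1 B2 \<and> a = fst p \<otimes> snd p"
      thus "p = (B1 b, B2 b)" using uniq by blast
    qed
  qed
  show ?thesis using part1 part2 by blast
qed

end
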